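(* Let $V$ and $W$ be Banach spaces, let $\mathcal A\subset\mathcal L(V,W)$ be bounded and let $T\in\mathcal L(W,V)$ be compact. Set $\mathcal B:=\{I+T\circ A: A\in\mathcal A\}$. Assume that each $B\in\mathcal B$ is an isomorphism of $V$ and that $\mathcal A$ is sequentially compact in the weak operator topology of $\mathcal L(V,W)$. Then $\sup_{B\in\mathcal B}\|B^{-1}\|_{\mathcal L(V)}<+\infty$. In particular, there exists $\kappa>0$ such that $\inf_{B\in\mathcal B}\mathfrak C(B)\ge\kappa$.
   Context: The weak operator topology on $\mathcal L(V,W)$ is the coarsest topology making all maps $A\mapsto\langle h,Av\rangle_{W',W}$ ($v\in V$, $h\in W'$) continuous; sequential compactness of $\mathcal A$ means every sequence in $\mathcal A$ has a subsequence $A_n$ and some $A\in\mathcal A$ with $\langle h,A_nv\rangle\to\langle h,Av\rangle$ for all $v\in V,h\in W'$. For $B\in\mathcal L(V)$, the Banach constant $\mathfrak C(B)$ is the supremum of all $\kappa>0$ with $B_V(0,\kappa)\subset B(B_V(0,1))$ (closed balls) if $B$ is surjective, and $0$ otherwise. *)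

theory Defs
  imports "HOL-Analysis.Analysis"
begin

definition compact_operator :: "('a::real_normed_vector \<Rightarrow>\<^sub>L 'b::real_normed_vector) \<Rightarrow> bool" where
  "compact_operator T \<longleftrightarrow> compact (closure (blinfun_apply T ` cball 0 1))"

definition wot_seq_compact :: "('a::real_normed_vector \<Rightarrow>\<^sub>L 'b::real_normed_vector) set \<Rightarrow> bool" where
  "wot_seq_compact \<A> \<longleftrightarrow>
     (\<forall>f::nat \<Rightarrow> ('a \<Rightarrow>\<^sub>L 'b). (\<forall>n. f n \<in> \<A>) \<longrightarrow>
        (\<exists>r A. strict_mono r \<and> A \<in> \<A> \<and>
           (\<forall>(v::'a) (h::'b \<Rightarrow>\<^sub>L real).
              (\<lambda>n. blinfun_apply h (blinfun_apply (f (r n)) v)) \<longlonglongrightarrow> blinfun_apply h (blinfun_apply A v))))"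

definition is_isomorphism :: "('a::real_normed_vector \<Rightarrow>\<^sub>L 'a) \<Rightarrow> bool" where
  "is_isomorphism B \<longleftrightarrow> (\<exists>C. C o\<^sub>L B = id_blinfun \<and> B o\<^sub>L C = id_blinfun)"

text \<open>Banach constant (extended-real valued, so that it may be +infinity).\<close>
definition banach_const :: "('a::real_normed_vector \<Rightarrow>\<^sub>L 'a) \<Rightarrow> ereal" where
  "banach_const B = (if surj (blinfun_apply B)
      then Sup (ereal ` {\<kappa>::real. \<kappa> > 0 \<and> cball 0 \<kappa> \<subseteq> blinfun_apply B ` cball 0 1})
      else 0)"

end

theory Submission
  imports Defs
begin
definition sublin :: "('a::real_vector \<Rightarrow> real) \<Rightarrow> bool" where
  "sublin q \<longleftrightarrow> (\<forall>x y. q (x + y) \<le> q x + q y) \<and> (\<forall>c x. c \<ge> 0 \<longrightarrow> q (c *\<^sub>R x) = c * q x)"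

lemma sublin_add: "sublin q \<Longrightarrow> q (x + y) \<le> q x + q y"
  unfolding sublin_def by blast

lemma sublin_scale: "sublin q \<Longrightarrow> c \<ge> 0 \<Longrightarrow> q (c *\<^sub>R x) = c * q x"
  unfolding sublin_def by blast

lemma sublin_0: "sublin q \<Longrightarrow> q 0 = 0"
  using sublin_scale[of q 0 0] by simp

lemma sublin_lb: "sublin q \<Longrightarrow> - q (- x) \<le> q x"
  using sublin_add[of q x "-x"] sublin_0[of q] by simp

definition shift :: "('a::real_vector \<Rightarrow> real) \<Rightarrow> 'a \<Rightarrow> 'a \<Rightarrow> real" where
  "shift q x y = Inf ((\<lambda>t. q (y + t *\<^sub>R x) - t * q x) ` {0..})"

lemma shift_bdd:
  assumes "sublin q"
  shows "bdd_below ((\<lambda>t. q (y + t *\<^sub>R x) - t * q x) ` {0..})"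
proof (rule bdd_belowI2)
  fix t :: real assume "t \<in> {0..}"
  then have "q (t *\<^sub>R x) = t * q x" using sublin_scale[OF assms] by simp
  moreover have "q ((y + t *\<^sub>R x) + (- y)) \<le> q (y + t *\<^sub>R x) + q (-y)"
    using sublin_add[OF assms] by blast
  ultimately show "- q (-y) \<le> q (y + t *\<^sub>R x) - t * q x" by simp
qed

lemma shift_le:
  assumes "sublin q" "t \<ge> 0"
  shows "shift q x y \<le> q (y + t *\<^sub>R x) - t * q x"
  unfolding shift_def using assms shift_bdd[OF assms(1)] by (intro cInf_lower) auto

lemma shift_ge:
  assumes "sublin q" "\<And>t. t \<ge> 0 \<Longrightarrow> b \<le> q (y + t *\<^sub>R x) - t * q x"
  shows "b \<le> shift q x y"
  unfolding shift_def using assms by (intro cInf_greatest) auto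

lemma shift_le_self: "sublin q \<Longrightarrow> shift q x y \<le> q y"
  using shift_le[of q 0 x y] by simp

lemma shift_neg: "sublin q \<Longrightarrow> shift q x (- x) \<le> - q x"
  using shift_le[of q 1 x "-x"] sublin_0[of q] by simp

lemma shift_sublin:
  assumes q: "sublin q"
  shows "sublin (shift q x)"
  unfolding sublin_def
proof (intro conjI allI impI)
  fix y1 y2
  have A: "shift q x (y1 + y2) - (q (y2 + s *\<^sub>R x) - s * q x) \<le> q (y1 + t *\<^sub>R x) - t * q x"
    if "t \<ge> 0" "s \<ge> 0" for s t
  proof -
    have "shift q x (y1 + y2) \<le> q ((y1 + y2) + (t + s) *\<^sub>R x) - (t + s) * q x"
      using shift_le[OF q, of "t + s"] that by simp
    also have "q ((y1 + y2) + (t + s) *\<^sub>R x) \<le> q (y1 + t *\<^sub>R x) + q (y2 + s *\<^sub>R x)"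
      using sublin_add[OF q, of "y1 + t *\<^sub>R x" "y2 + s *\<^sub>R x"]
      by (simp add: algebra_simps)
    finally show ?thesis by (simp add: algebra_simps)
  qed
  have B: "shift q x (y1 + y2) - (q (y2 + s *\<^sub>R x) - s * q x) \<le> shift q x y1" if "s \<ge> 0" for s
    using A that by (intro shift_ge[OF q]) auto
  have "shift q x (y1 + y2) - shift q x y1 \<le> shift q x y2"
    using B by (intro shift_ge[OF q]) (auto simp: algebra_simps)
  then show "shift q x (y1 + y2) \<le> shift q x y1 + shift q x y2" by simp
next
  fix c :: real and y
  assume c: "c \<ge> 0"
  show "shift q x (c *\<^sub>R y) = c * shift q x y"
  proof (cases "c = 0")
    case True
    have "shift q x 0 = 0"
    proof (rule antisym)
      show "shift q x 0 \<le> 0" using shift_le[OF q, of 0 x 0] sublin_0[OF q] by simp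
      show "0 \<le> shift q x 0"
        by (rule shift_ge[OF q]) (simp add: sublin_scale[OF q])
    qed
    then show ?thesis using True by simp
  next
    case False
    then have cp: "c > 0" using c by simp
    have 1: "shift q x (c *\<^sub>R y) / c \<le> shift q x y"
    proof (rule shift_ge[OF q])
      fix t :: real assume t: "t \<ge> 0"
      have "shift q x (c *\<^sub>R y) \<le> q (c *\<^sub>R y + (c * t) *\<^sub>R x) - (c * t) * q x"
        using shift_le[OF q, of "c * t"] t cp by simp
      also have "q (c *\<^sub>R y + (c * t) *\<^sub>R x) = c * q (y + t *\<^sub>R x)"
        using sublin_scale[OF q, of c "y + t *\<^sub>R x"] cp by (simp add: algebra_simps)
      finally show "shift q x (c *\<^sub>R y) / c \<le> q (y + t *\<^sub>R x) - t * q x"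
        using cp by (simp add: field_simps)
    qed
    have 2: "c * shift q x y \<le> shift q x (c *\<^sub>R y)"
    proof (rule shift_ge[OF q])
      fix t :: real assume t: "t \<ge> 0"
      have "shift q x y \<le> q (y + (t / c) *\<^sub>R x) - (t / c) * q x"
        using shift_le[OF q, of "t / c"] t cp by simp
      moreover have "q (c *\<^sub>R y + t *\<^sub>R x) = c * q (y + (t / c) *\<^sub>R x)"
        using sublin_scale[OF q, of c "y + (t / c) *\<^sub>R x"] cp by (simp add: algebra_simps)
      ultimately show "c * shift q x y \<le> q (c *\<^sub>R y + t *\<^sub>R x) - t * q x"
        using cp by (simp add: field_simps mult_left_mono)
    qed
    show ?thesis using 1 2 cp by (simp add: field_simps)
  qed
qed


lemma sublin_norm: "sublin (norm :: 'a::real_normed_vector \<Rightarrow> real)"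
  unfolding sublin_def by (simp add: norm_triangle_ineq)

lemma chain_inf_sublin:
  fixes C :: "('a::real_normed_vector \<Rightarrow> real) set"
  assumes ne: "C \<noteq> {}" and sub: "\<And>q. q \<in> C \<Longrightarrow> sublin q \<and> (\<forall>x. q x \<le> norm x)"
    and ch: "\<And>q1 q2. q1 \<in> C \<Longrightarrow> q2 \<in> C \<Longrightarrow> (\<forall>x. q1 x \<le> q2 x) \<or> (\<forall>x. q2 x \<le> q1 x)"
  defines "m \<equiv> (\<lambda>x. Inf ((\<lambda>q. q x) ` C))"
  shows "sublin m" and "\<And>q x. q \<in> C \<Longrightarrow> m x \<le> q x"
proof -
  have bdd: "bdd_below ((\<lambda>q. q x) ` C)" for x
  proof (rule bdd_belowI2)
    fix q assume "q \<in> C"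
    then have "- q (-x) \<le> q x" "q (-x) \<le> norm (-x)" using sub sublin_lb by blast+
    then show "- norm x \<le> q x" by simp
  qed
  show low: "m x \<le> q x" if "q \<in> C" for q x
    unfolding m_def using bdd that by (intro cInf_lower) auto
  have great: "b \<le> m x" if "\<And>q. q \<in> C \<Longrightarrow> b \<le> q x" for b x
    unfolding m_def using ne that by (intro cInf_greatest) auto
  show "sublin m"
    unfolding sublin_def
  proof (intro conjI allI impI)
    fix x y
    have "m (x + y) \<le> q1 x + q2 y" if "q1 \<in> C" "q2 \<in> C" for q1 q2
    proof -
      from ch[OF that] show ?thesis
      proof
        assume h: "\<forall>x. q1 x \<le> q2 x"
        have "m (x + y) \<le> q1 (x + y)" using low that by blast
        also have "\<dots> \<le> q1 x + q1 y" using sub that sublin_add by blast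
        finally show ?thesis using h by (meson add_left_mono order_trans)
      next
        assume h: "\<forall>x. q2 x \<le> q1 x"
        have "m (x + y) \<le> q2 (x + y)" using low that by blast
        also have "\<dots> \<le> q2 x + q2 y" using sub that sublin_add by blast
        finally show ?thesis using h by (meson add_right_mono order_trans)
      qed
    qed
    then have "m (x + y) - q2 y \<le> m x" if "q2 \<in> C" for q2
      using that by (intro great) (auto simp: algebra_simps)
    then have "m (x + y) - m x \<le> m y"
      by (intro great) (auto simp: algebra_simps)
    then show "m (x + y) \<le> m x + m y" by simp
  next
    fix c :: real and x
    assume c: "c \<ge> 0"
    show "m (c *\<^sub>R x) = c * m x"
    proof (cases "c = 0")
      case True
      have "m 0 = 0"
      proof (rule antisym)
        obtain q where "q \<in> C" using ne by blast
        then show "m 0 \<le> 0" using low[of q 0] sub sublin_0 by metis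
        show "0 \<le> m 0" by (rule great) (use sub sublin_0 in force)
      qed
      then show ?thesis using True by simp
    next
      case False
      then have cp: "c > 0" using c by simp
      have 1: "m (c *\<^sub>R x) / c \<le> m x"
      proof (rule great)
        fix q assume q: "q \<in> C"
        have "m (c *\<^sub>R x) \<le> q (c *\<^sub>R x)" using low q by blast
        also have "\<dots> = c * q x" using sub q sublin_scale c by blast
        finally show "m (c *\<^sub>R x) / c \<le> q x" using cp by (simp add: field_simps)
      qed
      have 2: "c * m x \<le> m (c *\<^sub>R x)"
      proof (rule great)
        fix q assume q: "q \<in> C"
        have "m x \<le> q x" using low q by blast
        then have "c * m x \<le> c * q x" using c by (rule mult_left_mono)
        also have "\<dots> = q (c *\<^sub>R x)" using sub q sublin_scale c by metis
        finally show "c * m x \<le> q (c *\<^sub>R x)" .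
      qed
      show ?thesis using 1 2 cp by (simp add: field_simps)
    qed
  qed
qed

lemma hahn_banach_point:
  fixes u :: "'a::real_normed_vector"
  assumes "u \<noteq> 0"
  shows "\<exists>g :: 'a \<Rightarrow>\<^sub>L real. g u \<noteq> 0"
proof -
  define A where "A = {q :: 'a \<Rightarrow> real. sublin q \<and> (\<forall>x. q x \<le> norm x) \<and> q (-u) \<le> - norm u}"
  define P where "P = (\<lambda>a b :: 'a \<Rightarrow> real. \<forall>x. b x \<le> a x)"
  have sA: "shift norm u \<in> A"
    unfolding A_def using shift_sublin[OF sublin_norm] shift_le_self[OF sublin_norm]
      shift_neg[OF sublin_norm, of u] by auto
  have po: "partial_order_on A (relation_of P A)"
  proof -
    have "refl_on A (relation_of P A)" unfolding refl_on_def relation_of_def P_def by auto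
    moreover have "trans (relation_of P A)" unfolding trans_def relation_of_def P_def
      by (auto intro: order_trans)
    moreover have "antisym (relation_of P A)" unfolding antisym_def relation_of_def P_def
      by (auto intro!: ext intro: antisym)
    moreover have "relation_of P A \<subseteq> A \<times> A" unfolding relation_of_def by auto
    ultimately show ?thesis unfolding partial_order_on_def preorder_on_def by blast
  qed
  have "\<exists>u \<in> A. \<forall>a \<in> C. P a u" if C: "C \<in> Chains (relation_of P A)" for C
  proof (cases "C = {}")
    case True then show ?thesis using sA by blast
  next
    case False
    have CA: "C \<subseteq> A" using C unfolding Chains_def relation_of_def by auto
    have ch: "(\<forall>x. q1 x \<le> q2 x) \<or> (\<forall>x. q2 x \<le> q1 x)" if "q1 \<in> C" "q2 \<in> C" for q1 q2
      using C that unfolding Chains_def relation_of_def P_def by blast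
    define m where "m = (\<lambda>x. Inf ((\<lambda>q. q x) ` C))"
    have sub: "sublin q \<and> (\<forall>x. q x \<le> norm x)" if "q \<in> C" for q
      using CA that unfolding A_def by auto
    have mm1: "sublin m" unfolding m_def
      by (rule chain_inf_sublin(1)) (use False sub ch in auto)
    have mm2: "m x \<le> q x" if "q \<in> C" for q x unfolding m_def
      by (rule chain_inf_sublin(2)) (use False sub ch that in auto)
    note mm = mm1 mm2
    obtain q0 where q0: "q0 \<in> C" using False by blast
    have "m x \<le> norm x" for x using mm(2)[OF q0, of x] sub[OF q0] by (meson order_trans)
    moreover have "m (-u) \<le> - norm u" using mm(2)[OF q0, of "-u"] q0 CA unfolding A_def by auto
    ultimately have "m \<in> A" unfolding A_def using mm(1) by blast
    moreover have "\<forall>a \<in> C. P a m" unfolding P_def using mm by blast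
    ultimately show ?thesis by blast
  qed
  then obtain q where qA: "q \<in> A" and qmin: "\<And>a. a \<in> A \<Longrightarrow> P q a \<Longrightarrow> a = q"
    using predicate_Zorn[OF po] by metis
  have sq: "sublin q" using qA unfolding A_def by auto
  have neg: "q (- x) = - q x" for x
  proof -
    have "shift q x \<in> A"
      using qA shift_sublin[OF sq] shift_le_self[OF sq] unfolding A_def
      by (auto intro: order_trans) (meson order_trans)
    moreover have "P q (shift q x)" unfolding P_def using shift_le_self[OF sq] by blast
    ultimately have "shift q x = q" using qmin by blast
    then have "q (-x) \<le> - q x" using shift_neg[OF sq, of x] by simp
    then show ?thesis using sublin_lb[OF sq, of x] by simp
  qed
  have add: "q (x + y) = q x + q y" for x y
  proof -
    have "q (-x + -y) \<le> q (-x) + q (-y)" using sublin_add[OF sq] by blast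
    then have "q (-(x+y)) \<le> - q x - q y" using neg by (simp add: algebra_simps)
    then show ?thesis using neg[of "x+y"] sublin_add[OF sq, of x y] by simp
  qed
  have scale: "q (c *\<^sub>R x) = c * q x" for c x
  proof (cases "c \<ge> 0")
    case True then show ?thesis using sublin_scale[OF sq] by blast
  next
    case False
    then have "q ((-c) *\<^sub>R x) = (-c) * q x" using sublin_scale[OF sq, of "-c"] by simp
    then show ?thesis using neg[of "(-c) *\<^sub>R x"] by simp
  qed
  have bnd: "norm (q x) \<le> norm x * 1" for x
    proof -
    have "q x \<le> norm x" "q (-x) \<le> norm (-x)" using qA unfolding A_def by blast+
    then show ?thesis using neg[of x] by (simp add: abs_le_iff)
  qed
  have bl: "bounded_linear q"
    by (rule bounded_linear_intro[of q 1]) (use add scale bnd in auto)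
  have "q u \<ge> norm u" using qA neg[of u] unfolding A_def by auto
  then have "q u \<noteq> 0" using assms by auto
  then show ?thesis using bl by (intro exI[of _ "Blinfun q"]) (simp add: bounded_linear_Blinfun_apply)
qed


lemma B_apply: "blinfun_apply (id_blinfun + (T o\<^sub>L A)) x = x + T (A x)"
  by (simp add: plus_blinfun.rep_eq)

lemma inverse_bound:
  fixes \<A> :: "('v::banach \<Rightarrow>\<^sub>L 'w::banach) set"
    and T :: "'w \<Rightarrow>\<^sub>L 'v"
  assumes bA: "bounded \<A>"
    and cT: "compact_operator T"
    and iso: "\<forall>A\<in>\<A>. is_isomorphism (id_blinfun + (T o\<^sub>L A))"
    and wot: "wot_seq_compact \<A>"
  shows "\<exists>M::real. \<forall>A\<in>\<A>. \<forall>C. C o\<^sub>L (id_blinfun + (T o\<^sub>L A)) = id_blinfun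
             \<and> (id_blinfun + (T o\<^sub>L A)) o\<^sub>L C = id_blinfun \<longrightarrow> norm C \<le> M"
proof (rule ccontr)
  assume neg: "\<not> ?thesis"
  obtain K where K: "K > 0" "\<And>A. A \<in> \<A> \<Longrightarrow> norm A \<le> K"
    using bA unfolding bounded_pos by blast
  have "\<exists>A x. A \<in> \<A> \<and> norm x = 1 \<and> norm (x + T (A x)) < 1 / (real n + 1)" for n
  proof -
    from neg obtain A C where A: "A \<in> \<A>" and CB: "C o\<^sub>L (id_blinfun + (T o\<^sub>L A)) = id_blinfun"
      and BC: "(id_blinfun + (T o\<^sub>L A)) o\<^sub>L C = id_blinfun" and nC: "norm C > real n + 1"
      by (meson not_le)
    have "\<exists>v. norm (C v) > (real n + 1) * norm v"
    proof (rule ccontr)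
      assume "\<nexists>v. norm (C v) > (real n + 1) * norm v"
      then have "norm C \<le> real n + 1" by (intro norm_blinfun_bound) (auto simp: not_less)
      then show False using nC by simp
    qed
    then obtain v where v: "norm (C v) > (real n + 1) * norm v" by blast
    have pos: "norm (C v) > 0" using v by (smt (verit) mult_nonneg_nonneg norm_ge_zero of_nat_0_le_iff)
    define x where "x = (1 / norm (C v)) *\<^sub>R C v"
    have nx: "norm x = 1" unfolding x_def using pos by simp
    have BCv: "C v + T (A (C v)) = v"
      using arg_cong[OF BC, of "\<lambda>F. blinfun_apply F v"] by (simp add: B_apply)
    have "x + T (A x) = (1 / norm (C v)) *\<^sub>R (C v + T (A (C v)))"
      unfolding x_def by (simp add: blinfun.scaleR_right scaleR_add_right)
    also have "\<dots> = (1 / norm (C v)) *\<^sub>R v" using BCv by simp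
    finally have "norm (x + T (A x)) = norm v / norm (C v)" by simp
    also have "\<dots> < 1 / (real n + 1)"
      using v pos by (simp add: field_simps)
    finally show ?thesis using A nx by blast
  qed
  then obtain As xs where As: "\<And>n. As n \<in> \<A>" and nxs: "\<And>n. norm (xs n) = 1"
    and small: "\<And>n. norm (xs n + T (As n (xs n))) < 1 / (real n + 1)"
    by metis
  define S where "S = closure (blinfun_apply T ` cball 0 1)"
  have sc: "seq_compact S" using cT unfolding compact_operator_def S_def
    by (rule compact_imp_seq_compact)
  have inS: "T ((1 / K) *\<^sub>R As n (xs n)) \<in> S" for n
  proof -
    have "norm (As n (xs n)) \<le> norm (As n) * norm (xs n)" by (rule norm_blinfun)
    also have "\<dots> \<le> K" using K(2)[OF As[of n]] nxs[of n] by simp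
    finally have "(1 / K) *\<^sub>R As n (xs n) \<in> cball 0 1" using K(1) by (simp add: field_simps)
    then show ?thesis unfolding S_def by (meson closure_subset image_eqI subsetD)
  qed
  obtain l r1 where r1: "strict_mono r1"
    and lim1: "((\<lambda>n. T ((1 / K) *\<^sub>R As n (xs n))) \<circ> r1) \<longlonglongrightarrow> l"
  proof -
    have "\<forall>n. T ((1 / K) *\<^sub>R As n (xs n)) \<in> S" using inS by blast
    from seq_compactE[OF sc this] that show ?thesis by blast
  qed
  obtain r2 A0 where r2: "strict_mono r2" and A0: "A0 \<in> \<A>"
    and wlim: "\<And>v (h::'w \<Rightarrow>\<^sub>L real). (\<lambda>n. blinfun_apply h (blinfun_apply ((As \<circ> r1) (r2 n)) v)) \<longlonglongrightarrow> blinfun_apply h (blinfun_apply A0 v)"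
  proof -
    have "\<forall>n. (As \<circ> r1) n \<in> \<A>" using As by simp
    then have "\<exists>r A. strict_mono r \<and> A \<in> \<A> \<and>
           (\<forall>(v::'v) (h::'w \<Rightarrow>\<^sub>L real).
              (\<lambda>n. blinfun_apply h (blinfun_apply ((As \<circ> r1) (r n)) v)) \<longlonglongrightarrow> blinfun_apply h (blinfun_apply A v))"
      using wot unfolding wot_seq_compact_def by blast
    then obtain r A where "strict_mono r" "A \<in> \<A>" and "\<forall>(v::'v) (h::'w \<Rightarrow>\<^sub>L real).
              (\<lambda>n. blinfun_apply h (blinfun_apply ((As \<circ> r1) (r n)) v)) \<longlonglongrightarrow> blinfun_apply h (blinfun_apply A v)"
      by blast
    then show ?thesis by (intro that[of r A]) auto
  qed
  define s where "s = r1 \<circ> r2"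
  have s: "strict_mono s" unfolding s_def using r1 r2 by (rule strict_mono_o)
  define a where "a n = As (s n)" for n
  define y where "y n = xs (s n)" for n
  define w where "w = K *\<^sub>R l"
  have F1: "(\<lambda>n. T (a n (y n))) \<longlonglongrightarrow> w"
  proof -
    have "((\<lambda>n. T ((1 / K) *\<^sub>R As n (xs n))) \<circ> r1 \<circ> r2) \<longlonglongrightarrow> l"
      using LIMSEQ_subseq_LIMSEQ[OF lim1 r2] .
    then have "(\<lambda>n. K *\<^sub>R T ((1 / K) *\<^sub>R a n (y n))) \<longlonglongrightarrow> K *\<^sub>R l"
      unfolding a_def y_def s_def comp_def by (intro tendsto_scaleR tendsto_const)
    moreover have "K *\<^sub>R T ((1 / K) *\<^sub>R a n (y n)) = T (a n (y n))" for n
      using K(1) by (simp add: blinfun.scaleR_right)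
    ultimately show ?thesis unfolding w_def by simp
  qed
  have F2: "(\<lambda>n. y n + T (a n (y n))) \<longlonglongrightarrow> 0"
  proof -
    have "(\<lambda>n. xs n + T (As n (xs n))) \<longlonglongrightarrow> 0"
    proof (rule Lim_null_comparison)
      show "\<forall>\<^sub>F n in sequentially. norm (xs n + T (As n (xs n))) \<le> 1 / (real n + 1)"
        by (intro always_eventually allI less_imp_le small)
      show "(\<lambda>n. 1 / (real n + 1)) \<longlonglongrightarrow> 0" 
        using LIMSEQ_Suc[OF lim_const_over_n[of 1]] by (simp add: add.commute)
    qed
    from LIMSEQ_subseq_LIMSEQ[OF this s] show ?thesis unfolding a_def y_def comp_def .
  qed
  have F3: "y \<longlonglongrightarrow> - w"
  proof -
    have "(\<lambda>n. (y n + T (a n (y n))) - T (a n (y n))) \<longlonglongrightarrow> 0 - w"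
      by (intro tendsto_diff F1 F2)
    then show ?thesis by simp
  qed
  have nw: "norm w = 1"
  proof -
    have "(\<lambda>n. norm (y n)) \<longlonglongrightarrow> norm (- w)" by (intro tendsto_norm F3)
    moreover have "(\<lambda>n. norm (y n)) \<longlonglongrightarrow> 1" unfolding y_def using nxs by simp
    ultimately show ?thesis using LIMSEQ_unique by fastforce
  qed
  have F5: "g (w + T (A0 w)) = 0" for g :: "'v \<Rightarrow>\<^sub>L real"
  proof -
    define h where "h = g o\<^sub>L T"
    have L1: "(\<lambda>n. g (T (a n w))) \<longlonglongrightarrow> g (T (A0 w))"
      using wlim[of h w] unfolding h_def a_def s_def by (simp add: comp_def)
    have L2: "(\<lambda>n. g (T (a n (y n)))) \<longlonglongrightarrow> g w"
      by (intro bounded_linear.tendsto[OF blinfun.bounded_linear_right] F1)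
    have L3: "(\<lambda>n. g (T (a n (y n + w)))) \<longlonglongrightarrow> 0"
    proof (rule Lim_null_comparison)
      have "norm (g (T (a n (y n + w)))) \<le> norm g * (norm T * (K * norm (y n + w)))" for n
      proof -
        have "norm (a n (y n + w)) \<le> norm (a n) * norm (y n + w)" by (rule norm_blinfun)
        also have "\<dots> \<le> K * norm (y n + w)"
          using K(2)[OF As[of "s n"]] unfolding a_def by (intro mult_right_mono) auto
        finally have 1: "norm (a n (y n + w)) \<le> K * norm (y n + w)" .
        have "norm (T (a n (y n + w))) \<le> norm T * norm (a n (y n + w))" by (rule norm_blinfun)
        also have "\<dots> \<le> norm T * (K * norm (y n + w))" using 1 by (intro mult_left_mono) auto
        finally have 2: "norm (T (a n (y n + w))) \<le> norm T * (K * norm (y n + w))" .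
        have "norm (g (T (a n (y n + w)))) \<le> norm g * norm (T (a n (y n + w)))" by (rule norm_blinfun)
        also have "\<dots> \<le> norm g * (norm T * (K * norm (y n + w)))" using 2 by (intro mult_left_mono) auto
        finally show ?thesis .
      qed
      then show "\<forall>\<^sub>F n in sequentially. norm (g (T (a n (y n + w)))) \<le> norm g * (norm T * (K * norm (y n + w)))"
        by simp
      have "(\<lambda>n. y n + w) \<longlonglongrightarrow> - w + w" by (intro tendsto_add F3 tendsto_const)
      then have "(\<lambda>n. norm (y n + w)) \<longlonglongrightarrow> 0" using tendsto_norm_zero by fastforce
      then have "(\<lambda>n. norm g * (norm T * (K * norm (y n + w)))) \<longlonglongrightarrow> norm g * (norm T * (K * 0))"
        by (intro tendsto_mult tendsto_const)
      then show "(\<lambda>n. norm g * (norm T * (K * norm (y n + w)))) \<longlonglongrightarrow> 0" by simp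
    qed
    have eq: "g (T (a n (y n))) = g (T (a n (y n + w))) - g (T (a n w))" for n
      by (simp add: blinfun.add_right blinfun.diff_right)
    have "(\<lambda>n. g (T (a n (y n)))) \<longlonglongrightarrow> 0 - g (T (A0 w))"
      unfolding eq by (intro tendsto_diff L1 L3)
    with L2 have "g w = 0 - g (T (A0 w))" using LIMSEQ_unique by blast
    then show ?thesis by (simp add: blinfun.add_right)
  qed
  have z: "w + T (A0 w) = 0"
    using hahn_banach_point F5 by blast
  obtain C where CB: "C o\<^sub>L (id_blinfun + (T o\<^sub>L A0)) = id_blinfun"
    using iso A0 unfolding is_isomorphism_def by blast
  have "w = C (w + T (A0 w))"
    using arg_cong[OF CB, of "\<lambda>F. blinfun_apply F w"] by (simp add: B_apply)
  then have "w = 0" using z by simp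
  then show False using nw by simp
qed

theorem mainTheorem8:
  fixes \<A> :: "('v::banach \<Rightarrow>\<^sub>L 'w::banach) set"
    and T :: "'w \<Rightarrow>\<^sub>L 'v"
  assumes "bounded \<A>"
    and "compact_operator T"
    and "\<forall>A\<in>\<A>. is_isomorphism (id_blinfun + (T o\<^sub>L A))"
    and "wot_seq_compact \<A>"
  shows "(\<exists>M::real. \<forall>A\<in>\<A>. \<forall>C. C o\<^sub>L (id_blinfun + (T o\<^sub>L A)) = id_blinfun
             \<and> (id_blinfun + (T o\<^sub>L A)) o\<^sub>L C = id_blinfun \<longrightarrow> norm C \<le> M)
       \<and> (\<exists>\<kappa>::real. \<kappa> > 0 \<and> (\<forall>A\<in>\<A>. ereal \<kappa> \<le> banach_const (id_blinfun + (T o\<^sub>L A))))"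
proof
  show "\<exists>M::real. \<forall>A\<in>\<A>. \<forall>C. C o\<^sub>L (id_blinfun + (T o\<^sub>L A)) = id_blinfun
             \<and> (id_blinfun + (T o\<^sub>L A)) o\<^sub>L C = id_blinfun \<longrightarrow> norm C \<le> M"
    by (rule inverse_bound[OF assms])
  then obtain M where PM: "\<forall>A\<in>\<A>. \<forall>C. C o\<^sub>L (id_blinfun + (T o\<^sub>L A)) = id_blinfun
             \<and> (id_blinfun + (T o\<^sub>L A)) o\<^sub>L C = id_blinfun \<longrightarrow> norm C \<le> M" by blast
  define M' where "M' = max M 1"
  have M'p: "M' > 0" unfolding M'_def by simp
  show "\<exists>\<kappa>::real. \<kappa> > 0 \<and> (\<forall>A\<in>\<A>. ereal \<kappa> \<le> banach_const (id_blinfun + (T o\<^sub>L A)))"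
  proof (intro exI conjI ballI)
    show "1 / M' > 0" using M'p by simp
    fix A assume A: "A \<in> \<A>"
    obtain C where CB: "C o\<^sub>L (id_blinfun + (T o\<^sub>L A)) = id_blinfun"
      and BC: "(id_blinfun + (T o\<^sub>L A)) o\<^sub>L C = id_blinfun"
      using assms(3) A unfolding is_isomorphism_def by blast
    have nC: "norm C \<le> M'" using PM A CB BC unfolding M'_def by fastforce
    have BCv: "blinfun_apply (id_blinfun + (T o\<^sub>L A)) (C v) = v" for v
      using arg_cong[OF BC, of "\<lambda>F. blinfun_apply F v"] by simp
    have surj: "surj (blinfun_apply (id_blinfun + (T o\<^sub>L A)))"
      using BCv by (metis surjI)
    have "cball 0 (1 / M') \<subseteq> blinfun_apply (id_blinfun + (T o\<^sub>L A)) ` cball 0 1"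
    proof
      fix v :: 'v assume "v \<in> cball 0 (1 / M')"
      then have nv: "norm v \<le> 1 / M'" by simp
      have "norm (C v) \<le> norm C * norm v" by (rule norm_blinfun)
      also have "\<dots> \<le> M' * (1 / M')" using nC nv M'p by (intro mult_mono) auto
      also have "\<dots> = 1" using M'p by simp
      finally have "C v \<in> cball 0 1" by simp
      then show "v \<in> blinfun_apply (id_blinfun + (T o\<^sub>L A)) ` cball 0 1"
        using BCv by (metis image_eqI)
    qed
    then have "1 / M' \<in> {\<kappa>::real. \<kappa> > 0 \<and> cball 0 \<kappa> \<subseteq> blinfun_apply (id_blinfun + (T o\<^sub>L A)) ` cball 0 1}"
      using M'p by simp
    then have "ereal (1 / M') \<le> Sup (ereal ` {\<kappa>::real. \<kappa> > 0 \<and> cball 0 \<kappa> \<subseteq> blinfun_apply (id_blinfun + (T o\<^sub>L A)) ` cball 0 1})"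
      by (intro Sup_upper imageI)
    then show "ereal (1 / M') \<le> banach_const (id_blinfun + (T o\<^sub>L A))"
      unfolding banach_const_def using surj by simp
  qed
qed

end
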